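(* Let $Q=(q_n)_{n\ge1}$ be a basic sequence that is infinite in limit. Then the set $\Theta_Q$ is perfect.
   Context: A basic sequence is a sequence $Q=(q_n)_{n\ge1}$ of integers with $q_n\ge 2$; it is infinite in limit if $q_n\to\infty$. $\mathbb{N}$ denotes the positive integers. For each positive integer $j$ let $\nu_j=\min\{N : q_m\ge 2j^2 \text{ for all } m\ge N\}$. Define $l_1=\max(\nu_2-1,1)$ and, recursively for $i\ge 2$, $l_i=\max\big(\min\{k\in\mathbb{N} : l_1+2l_2+\cdots+(i-1)l_{i-1}+ik\ge \nu_{i+1}-1\},1\big)$. Put $L_i=\sum_{j=1}^i jl_j$ (with $L_0=0$). Let $S_Q=\{(a,b,c)\in\mathbb{N}^3 : b\le l_a,\ c\le a\}$ and $\phi_Q(a,b,c)=L_{a-1}+(b-1)a+c$; $\phi_Q$ is a bijection $S_Q\to\mathbb{N}$. A $Q$-special sequence is a family of integers $F=(F_{(a,b,c)})_{(a,b,c)\in S_Q}$ with $F_{(a,b,1)}=0$ for all $(a,b,1)\in S_Q$ and $\frac{F_{(a,b,c)}}{q_{\phi_Q(a,b,c)}}\in\left[\frac{c-1}{a}-\frac{1}{2a^2},\frac{c-1}{a}+\frac{1}{2a^2}\right]$ for $(a,b,c)\in S_Q$ with $c>1$. Let $\Gamma_Q$ be the set of $Q$-special sequences. For $F\in\Gamma_Q$ put $E_{F,n}=F_{\phi_Q^{-1}(n)}$ and $x_F=\sum_{n=1}^\infty \frac{E_{F,n}}{q_1q_2\cdots q_n}$. Define $\Theta_Q=\{x_F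 : F\in\Gamma_Q\}\subseteq[0,1)$. *)

theory Defs
  imports "HOL-Analysis.Analysis"
begin

text \<open>Sequences are indexed from 1; the value at index 0 is irrelevant.\<close>

definition basic_sequence :: "(nat \<Rightarrow> nat) \<Rightarrow> bool" where
  "basic_sequence q \<longleftrightarrow> (\<forall>n\<ge>1. q n \<ge> 2)"

definition infinite_in_limit :: "(nat \<Rightarrow> nat) \<Rightarrow> bool" where
  "infinite_in_limit q \<longleftrightarrow> filterlim q at_top sequentially"

definition nuQ :: "(nat \<Rightarrow> nat) \<Rightarrow> nat \<Rightarrow> nat" where
  "nuQ q j = (LEAST N. N \<ge> 1 \<and> (\<forall>m\<ge>N. q m \<ge> 2 * j^2))"

text \<open>l_i given L_{i-1} = l_1 + 2 l_2 + ... + (i-1) l_{i-1}.\<close>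
definition lstep :: "(nat \<Rightarrow> nat) \<Rightarrow> nat \<Rightarrow> nat \<Rightarrow> nat" where
  "lstep q i Lprev = (if i = 1 then max (nuQ q 2 - 1) 1
     else max (LEAST k. k \<ge> 1 \<and> Lprev + i * k \<ge> nuQ q (i + 1) - 1) 1)"

primrec LQ :: "(nat \<Rightarrow> nat) \<Rightarrow> nat \<Rightarrow> nat" where
  "LQ q 0 = 0"
| "LQ q (Suc i) = LQ q i + Suc i * lstep q (Suc i) (LQ q i)"

definition lQ :: "(nat \<Rightarrow> nat) \<Rightarrow> nat \<Rightarrow> nat" where
  "lQ q i = lstep q i (LQ q (i - 1))"

definition SQ :: "(nat \<Rightarrow> nat) \<Rightarrow> (nat \<times> nat \<times> nat) set" where
  "SQ q = {(a, b, c). a \<ge> 1 \<and> b \<ge> 1 \<and> c \<ge> 1 \<and> b \<le> lQ q a \<and> c \<le> a}"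

definition phiQ :: "(nat \<Rightarrow> nat) \<Rightarrow> nat \<times> nat \<times> nat \<Rightarrow> nat" where
  "phiQ q t = (case t of (a, b, c) \<Rightarrow> LQ q (a - 1) + (b - 1) * a + c)"

definition special_seq :: "(nat \<Rightarrow> nat) \<Rightarrow> (nat \<times> nat \<times> nat \<Rightarrow> int) \<Rightarrow> bool" where
  "special_seq q F \<longleftrightarrow>
     (\<forall>(a, b, c) \<in> SQ q. c = 1 \<longrightarrow> F (a, b, c) = 0) \<and>
     (\<forall>(a, b, c) \<in> SQ q. c > 1 \<longrightarrow>
        of_int (F (a, b, c)) / real (q (phiQ q (a, b, c)))
          \<in> {(real c - 1) / real a - 1 / (2 * real a ^ 2) ..
             (real c - 1) / real a + 1 / (2 * real a ^ 2)})"

definition GammaQ :: "(nat \<Rightarrow> nat) \<Rightarrow> (nat \<times> nat \<times> nat \<Rightarrow> int) set" where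
  "GammaQ q = {F. special_seq q F}"

definition EQ :: "(nat \<Rightarrow> nat) \<Rightarrow> (nat \<times> nat \<times> nat \<Rightarrow> int) \<Rightarrow> nat \<Rightarrow> int" where
  "EQ q F n = F (inv_into (SQ q) (phiQ q) n)"

definition xQ :: "(nat \<Rightarrow> nat) \<Rightarrow> (nat \<times> nat \<times> nat \<Rightarrow> int) \<Rightarrow> real" where
  "xQ q F = (\<Sum>n. of_int (EQ q F (Suc n)) / (\<Prod>k\<in>{1..Suc n}. real (q k)))"

definition ThetaQ :: "(nat \<Rightarrow> nat) \<Rightarrow> real set" where
  "ThetaQ q = xQ q ` GammaQ q"

definition perfect_set :: "'a::topological_space set \<Rightarrow> bool" where
  "perfect_set S \<longleftrightarrow> closed S \<and> (\<forall>x\<in>S. x islimpt S)"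

end

theory Submission
  imports Defs
begin


lemma lstep_ge1: "lstep q i L \<ge> 1"
  unfolding lstep_def by auto

lemma LQ_Suc': "LQ q (Suc i) = LQ q i + Suc i * lQ q (Suc i)"
  by (simp add: lQ_def)

lemma LQ_mono: "i \<le> j \<Longrightarrow> LQ q i \<le> LQ q j"
  by (induction j) (auto simp: le_Suc_eq)

lemma LQ_ge: "LQ q i \<ge> i"
proof (induction i)
  case (Suc i)
  have "lstep q (Suc i) (LQ q i) \<ge> 1" by (rule lstep_ge1)
  then have "Suc i * lstep q (Suc i) (LQ q i) \<ge> 1" by simp
  with Suc show ?case by simp
qed simp

lemma LQ_strict: "i < j \<Longrightarrow> LQ q i < LQ q j"
proof (induction j)
  case (Suc j)
  have "lstep q (Suc j) (LQ q j) \<ge> 1" by (rule lstep_ge1)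
  then have "Suc j * lstep q (Suc j) (LQ q j) \<ge> 1" by simp
  with Suc show ?case by (auto simp: less_Suc_eq)
qed simp

lemma phi_bounds:
  assumes "(a,b,c) \<in> SQ q"
  shows "LQ q (a-1) < phiQ q (a,b,c)" "phiQ q (a,b,c) \<le> LQ q a"
proof -
  from assms have a: "a \<ge> 1" "b \<ge> 1" "c \<ge> 1" "b \<le> lQ q a" "c \<le> a" by (auto simp: SQ_def)
  show "LQ q (a-1) < phiQ q (a,b,c)" using a by (simp add: phiQ_def)
  obtain i where i: "a = Suc i" using a by (cases a) auto
  have "(b-1)*a + c \<le> (lQ q a - 1)*a + a" using a by (intro add_mono mult_right_mono) auto
  also have "\<dots> = lQ q a * a" using a by (cases "lQ q a") auto
  finally show "phiQ q (a,b,c) \<le> LQ q a" using i LQ_Suc'[of q i] by (simp add: phiQ_def mult.commute)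
qed

lemma divmod_eq:
  fixes x y r s a :: nat
  assumes "x*a + r = y*a + s" "r < a" "s < a"
  shows "x = y \<and> r = s"
proof -
  have "x = (x*a+r) div a" using assms(2) by simp
  also have "\<dots> = (y*a+s) div a" using assms(1) by simp
  also have "\<dots> = y" using assms(3) by simp
  finally have 1: "x = y" .
  have "r = (x*a+r) mod a" using assms(2) by simp
  also have "\<dots> = (y*a+s) mod a" using assms(1) by simp
  also have "\<dots> = s" using assms(3) by simp
  finally show ?thesis using 1 by simp
qed

lemma phi_inj: "inj_on (phiQ q) (SQ q)"
proof (rule inj_onI)
  fix t t' assume t: "t \<in> SQ q" and t': "t' \<in> SQ q" and eq: "phiQ q t = phiQ q t'"
  obtain a b c where tt: "t = (a,b,c)" by (cases t) auto
  obtain a' b' c' where tt': "t' = (a',b',c')" by (cases t') auto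
  have aa: "a = a'"
  proof (rule ccontr)
    assume "a \<noteq> a'"
    then consider "a < a'" | "a' < a" by linarith
    then show False
    proof cases
      case 1
      have "phiQ q t \<le> LQ q a" using phi_bounds t tt by auto
      also have "\<dots> \<le> LQ q (a'-1)" using 1 by (intro LQ_mono) auto
      also have "\<dots> < phiQ q t'" using phi_bounds t' tt' by auto
      finally show False using eq by simp
    next
      case 2
      have "phiQ q t' \<le> LQ q a'" using phi_bounds t' tt' by auto
      also have "\<dots> \<le> LQ q (a-1)" using 2 by (intro LQ_mono) auto
      also have "\<dots> < phiQ q t" using phi_bounds t tt by auto
      finally show False using eq by simp
    qed
  qed
  from t t' tt tt' aa have c: "c \<ge> 1" "c \<le> a" "c' \<ge> 1" "c' \<le> a" "b \<ge> 1" "b' \<ge> 1" by (auto simp: SQ_def)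
  from eq have "(b-1)*a + (c-1) = (b'-1)*a + (c'-1)" using tt tt' aa c by (simp add: phiQ_def)
  then have "b-1 = b'-1 \<and> c-1 = c'-1" using c by (intro divmod_eq) auto
  then show "t = t'" using tt tt' aa c by auto
qed

lemma phi_surj:
  assumes n: "n \<ge> 1"
  shows "n \<in> phiQ q ` SQ q"
proof -
  have ex: "\<exists>a. n \<le> LQ q a" using LQ_ge by blast
  define a where "a = (LEAST a. n \<le> LQ q a)"
  have a1: "n \<le> LQ q a" unfolding a_def by (rule LeastI_ex[OF ex])
  have a0: "a \<noteq> 0"
  proof
    assume "a = 0" then have "LQ q a = 0" by simp
    with a1 n show False by simp
  qed
  then obtain i where i: "a = Suc i" by (cases a) auto
  have a2: "LQ q i < n" using not_less_Least[of i "\<lambda>a. n \<le> LQ q a"] unfolding a_def[symmetric] i by auto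
  define r where "r = n - LQ q i - 1"
  have rl: "r < a * lQ q a" using a1 a2 LQ_Suc'[of q i] unfolding r_def i by simp
  define b where "b = r div a + 1"
  define c where "c = r mod a + 1"
  have 1: "r div a < lQ q a" using rl a0 by (simp add: div_less_iff_less_mult mult.commute)
  have "r mod a < a" using a0 by simp
  hence 2: "Suc (r mod a) \<le> a" by (rule Suc_leI)
  have "(a,b,c) \<in> SQ q" using a0 1 2 unfolding SQ_def b_def c_def by simp
  moreover have "phiQ q (a,b,c) = LQ q i + ((r div a)*a + r mod a) + 1"
    unfolding phiQ_def b_def c_def i by simp
  moreover have "(r div a)*a + r mod a = r" by (rule div_mult_mod_eq)
  moreover have "LQ q i + r + 1 = n" using a2 unfolding r_def by simp
  ultimately show ?thesis by (metis image_eqI)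
qed



lemma nu_prop:
  assumes il: "infinite_in_limit q"
  shows "nuQ q j \<ge> 1 \<and> (\<forall>m\<ge>nuQ q j. q m \<ge> 2*j^2)"
proof -
  have "eventually (\<lambda>m. 2*j^2 \<le> q m) sequentially"
    using il unfolding infinite_in_limit_def filterlim_at_top by blast
  then obtain N where N: "\<forall>m\<ge>N. 2*j^2 \<le> q m" by (auto simp: eventually_sequentially)
  have ex: "\<exists>N. N \<ge> 1 \<and> (\<forall>m\<ge>N. q m \<ge> 2*j^2)"
    by (rule exI[of _ "max N 1"]) (use N in auto)
  show ?thesis unfolding nuQ_def by (rule LeastI_ex[OF ex])
qed

lemma LQ_nu:
  assumes "i \<ge> 1"
  shows "nuQ q (i+1) - 1 \<le> LQ q i"
proof (cases "i = 1")
  case True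
  then show ?thesis by (simp add: lstep_def numeral_2_eq_2)
next
  case False
  then obtain j where j: "i = Suc j" "j \<ge> 1" using assms by (cases i) auto
  define P where "P = (\<lambda>k. k \<ge> 1 \<and> LQ q j + Suc j * k \<ge> nuQ q (Suc j + 1) - 1)"
  have ex: "\<exists>k. P k"
  proof
    show "P (max 1 (nuQ q (Suc j + 1)))" unfolding P_def
    proof
      have "nuQ q (Suc j + 1) - 1 \<le> max 1 (nuQ q (Suc j + 1))" by simp
      also have "\<dots> \<le> Suc j * max 1 (nuQ q (Suc j + 1))" by simp
      finally show "LQ q j + Suc j * max 1 (nuQ q (Suc j + 1)) \<ge> nuQ q (Suc j + 1) - 1" by linarith
    qed simp
  qed
  have "P (LEAST k. P k)" by (rule LeastI_ex[OF ex])
  then have 1: "LQ q j + Suc j * (LEAST k. P k) \<ge> nuQ q (Suc j + 1) - 1" unfolding P_def by blast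
  have "lstep q (Suc j) (LQ q j) = max (LEAST k. P k) 1" unfolding lstep_def P_def using j by simp
  moreover have "Suc j * (LEAST k. P k) \<le> Suc j * max (LEAST k. P k) 1" by (intro mult_le_mono2) simp
  ultimately have "LQ q (Suc j) \<ge> LQ q j + Suc j * (LEAST k. P k)" by (simp only: LQ.simps)
  with 1 j show ?thesis by simp
qed

lemma key_pos:
  assumes il: "infinite_in_limit q" and a: "a \<ge> 2"
  shows "(a,1,2) \<in> SQ q" "q (phiQ q (a,1,2)) \<ge> 2*a^2" "phiQ q (a,1,2) \<ge> a + 1"
proof -
  show "(a,1,2) \<in> SQ q" using a lstep_ge1[of q a] by (auto simp: SQ_def lQ_def)
  have "nuQ q ((a-1)+1) - 1 \<le> LQ q (a-1)" using a by (intro LQ_nu) auto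
  then have "nuQ q a \<le> phiQ q (a,1,2)" using a by (simp add: phiQ_def)
  then show "q (phiQ q (a,1,2)) \<ge> 2*a^2" using nu_prop[OF il, of a] by blast
  show "phiQ q (a,1,2) \<ge> a + 1" using LQ_ge[of "a-1" q] a by (simp add: phiQ_def)
qed

definition ok :: "(nat \<Rightarrow> nat) \<Rightarrow> nat \<times> nat \<times> nat \<Rightarrow> int \<Rightarrow> bool" where
  "ok q t k = (case t of (a,b,c) \<Rightarrow> (c = 1 \<longrightarrow> k = 0) \<and> (1 < c \<longrightarrow>
        of_int k / real (q (phiQ q (a, b, c)))
          \<in> {(real c - 1) / real a - 1 / (2 * real a ^ 2) ..
             (real c - 1) / real a + 1 / (2 * real a ^ 2)}))"

lemma special_seq_iff: "special_seq q F \<longleftrightarrow> (\<forall>t\<in>SQ q. ok q t (F t))"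
  unfolding special_seq_def ok_def by (auto split: prod.splits)

lemma ok_bounds:
  assumes bs: "basic_sequence q" and t: "t \<in> SQ q" and k: "ok q t k"
  shows "0 \<le> k \<and> k \<le> int (q (phiQ q t))"
proof -
  obtain a b c where tt: "t = (a,b,c)" by (cases t) auto
  from t tt have a: "a \<ge> 1" "c \<ge> 1" "c \<le> a" by (auto simp: SQ_def)
  have "phiQ q t \<ge> 1" using a tt by (simp add: phiQ_def)
  then have Q: "q (phiQ q t) \<ge> 2" using bs by (simp add: basic_sequence_def)
  show ?thesis
  proof (cases "c = 1")
    case True then show ?thesis using k tt by (simp add: ok_def)
  next
    case False
    then have c: "c \<ge> 2" using a by simp
    define Qr where "Qr = real (q (phiQ q t))"
    have Qr: "Qr \<ge> 2" using Q unfolding Qr_def by simp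
    define x where "x = of_int k / Qr"
    have x: "x \<ge> (real c - 1) / real a - 1 / (2 * real a ^ 2)" "x \<le> (real c - 1) / real a + 1 / (2 * real a ^ 2)"
      using k tt c unfolding ok_def x_def Qr_def by auto
    have ar: "real a \<ge> 1" "real c \<ge> 2" "real c \<le> real a" using a c by auto
    have "(real c - 1) / real a - 1 / (2 * real a ^ 2) \<ge> 0"
    proof -
      have "1 / (2 * real a ^ 2) \<le> 1 / real a" using ar by (simp add: field_simps power2_eq_square)
      also have "\<dots> \<le> (real c - 1) / real a" using ar by (simp add: divide_right_mono)
      finally show ?thesis by simp
    qed
    moreover have "(real c - 1) / real a + 1 / (2 * real a ^ 2) \<le> 1"
    proof -
      have "1 / (2 * real a ^ 2) \<le> 1 / real a" using ar by (simp add: field_simps power2_eq_square)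
      moreover have "(real c - 1) / real a \<le> (real a - 1) / real a" using ar by (simp add: divide_right_mono)
      moreover have "(real a - 1) / real a + 1 / real a = 1" using ar by (simp add: field_simps)
      ultimately show ?thesis by linarith
    qed
    ultimately have "0 \<le> x" "x \<le> 1" using x by auto
    then have "(0::real) \<le> of_int k" "of_int k \<le> Qr" using Qr unfolding x_def by (auto simp: field_simps)
    then show ?thesis unfolding Qr_def by simp
  qed
qed



definition PP :: "(nat \<Rightarrow> nat) \<Rightarrow> nat \<Rightarrow> real" where
  "PP q m = (\<Prod>k\<in>{1..m}. real (q k))"

lemma PP_Suc: "PP q (Suc m) = PP q m * real (q (Suc m))"
  unfolding PP_def by (simp add: prod.nat_ivl_Suc')

lemma PP_ge: assumes bs: "basic_sequence q" shows "PP q m \<ge> 2^m"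
proof (induction m)
  case 0 then show ?case by (simp add: PP_def)
next
  case (Suc m)
  have "q (Suc m) \<ge> 2" using bs by (simp add: basic_sequence_def)
  then have "real (q (Suc m)) \<ge> 2" by simp
  moreover have "0 \<le> PP q m" using Suc.IH by (metis order_trans zero_le_numeral zero_le_power)
  ultimately have "2^m * 2 \<le> PP q m * real (q (Suc m))" using Suc by (intro mult_mono) auto
  then show ?case by (simp add: PP_Suc mult.commute)
qed

lemma PP_pos: assumes bs: "basic_sequence q" shows "PP q m > 0"
  using PP_ge[OF bs, of m] by (smt (verit) zero_less_power)

definition Dn :: "(nat \<Rightarrow> nat) \<Rightarrow> nat \<Rightarrow> real set" where
  "Dn q n = (if n = 0 then {0} else {of_int k | k. ok q (inv_into (SQ q) (phiQ q) n) k})"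

lemma inv_in: "n \<ge> 1 \<Longrightarrow> inv_into (SQ q) (phiQ q) n \<in> SQ q"
  by (rule inv_into_into[OF phi_surj])

lemma phi_inv: "n \<ge> 1 \<Longrightarrow> phiQ q (inv_into (SQ q) (phiQ q) n) = n"
  by (rule f_inv_into_f[OF phi_surj])

lemma Dn_bound:
  assumes bs: "basic_sequence q" and x: "x \<in> Dn q n"
  shows "\<exists>k. x = of_int k \<and> 0 \<le> k \<and> k \<le> int (q n)"
proof (cases "n = 0")
  case True then show ?thesis using x by (auto simp: Dn_def)
next
  case False
  then have n: "n \<ge> 1" by simp
  from x False obtain k where k: "x = of_int k" "ok q (inv_into (SQ q) (phiQ q) n) k"
    by (auto simp: Dn_def)
  from ok_bounds[OF bs inv_in[OF n] k(2)] phi_inv[OF n] k(1) show ?thesis by auto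
qed

lemma Dn_finite:
  assumes bs: "basic_sequence q"
  shows "finite (Dn q n)"
proof -
  have "Dn q n \<subseteq> real_of_int ` {0..int (q n)}"
    using Dn_bound[OF bs] by fastforce
  then show ?thesis by (rule finite_subset) simp
qed

definition KK :: "(nat \<Rightarrow> nat) \<Rightarrow> (nat \<Rightarrow> real) set" where
  "KK q = Pi UNIV (Dn q)"

definition VV :: "(nat \<Rightarrow> nat) \<Rightarrow> (nat \<Rightarrow> real) \<Rightarrow> real" where
  "VV q f = (\<Sum>n. f (Suc n) / PP q (Suc n))"

lemma term_bound:
  assumes bs: "basic_sequence q" and f: "f \<in> KK q"
  shows "norm (f (Suc i) / PP q (Suc i)) \<le> (1/2)^i"
proof -
  obtain k where k: "f (Suc i) = of_int k" "0 \<le> k" "k \<le> int (q (Suc i))"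
    using Dn_bound[OF bs, of "f (Suc i)"] f by (auto simp: KK_def)
  have "q (Suc i) \<ge> 2" using bs by (simp add: basic_sequence_def)
  then have qp: "real (q (Suc i)) > 0" by simp
  have "norm (f (Suc i) / PP q (Suc i)) = of_int k / (PP q i * real (q (Suc i)))"
    using k PP_pos[OF bs, of i] qp by (simp add: PP_Suc)
  also have "\<dots> \<le> real (q (Suc i)) / (PP q i * real (q (Suc i)))"
    using k PP_pos[OF bs, of i] qp by (intro divide_right_mono) auto
  also have "\<dots> = 1 / PP q i" using qp by simp
  also have "\<dots> \<le> 1 / 2^i" using PP_ge[OF bs, of i] PP_pos[OF bs, of i] by (intro divide_left_mono) auto
  finally show ?thesis by (simp add: power_divide)
qed

lemma KK_compact:
  assumes bs: "basic_sequence q"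
  shows "compact (KK q)"
proof -
  have "compactin (product_topology (\<lambda>_. euclidean) UNIV) (PiE UNIV (Dn q))"
    using Dn_finite[OF bs] by (auto simp: compactin_PiE intro: finite_imp_compact)
  then show ?thesis by (simp add: euclidean_product_topology PiE_UNIV_domain KK_def)
qed

lemma VV_cont:
  assumes bs: "basic_sequence q"
  shows "continuous_on (KK q) (VV q)"
proof -
  have ul: "uniform_limit (KK q) (\<lambda>n x. \<Sum>i<n. x (Suc i) / PP q (Suc i))
      (\<lambda>x. suminf (\<lambda>i. x (Suc i) / PP q (Suc i))) sequentially"
    apply (rule Weierstrass_m_test[where M = "\<lambda>i. (1/2)^i"])
     apply (rule term_bound[OF bs], assumption)
    by (rule summable_geometric) simp
  have proj: "continuous_on (KK q) (\<lambda>x::nat\<Rightarrow>real. x j)" for j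
    by (rule continuous_on_subset[OF continuous_on_product_coordinates]) simp
  have "\<forall>\<^sub>F n in sequentially. continuous_on (KK q) (\<lambda>x. \<Sum>i<n. x (Suc i) / PP q (Suc i))"
    using PP_pos[OF bs] by (intro always_eventually allI continuous_intros proj) (auto simp: less_imp_neq[symmetric])
  from uniform_limit_theorem[OF this ul] show ?thesis unfolding VV_def by simp
qed

lemma VV_summable:
  assumes bs: "basic_sequence q" and f: "f \<in> KK q"
  shows "summable (\<lambda>n. f (Suc n) / PP q (Suc n))"
  by (rule summable_comparison_test[OF _ summable_geometric[of "1/2"]]) (use term_bound[OF bs f] in auto)

lemma Theta_eq:
  assumes bs: "basic_sequence q"
  shows "ThetaQ q = VV q ` KK q"
proof
  show "ThetaQ q \<subseteq> VV q ` KK q"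
  proof
    fix x assume "x \<in> ThetaQ q"
    then obtain F where F: "special_seq q F" "x = xQ q F" by (auto simp: ThetaQ_def GammaQ_def)
    define f where "f = (\<lambda>n. if n = 0 then 0 else real_of_int (EQ q F n))"
    have "f \<in> KK q"
      unfolding KK_def
    proof
      fix n :: nat
      show "f n \<in> Dn q n"
      proof (cases "n = 0")
        case True then show ?thesis by (simp add: f_def Dn_def)
      next
        case False
        then have "ok q (inv_into (SQ q) (phiQ q) n) (F (inv_into (SQ q) (phiQ q) n))"
          using F(1) inv_in[of n q] by (auto simp: special_seq_iff)
        then show ?thesis using False by (auto simp: f_def Dn_def EQ_def)
      qed
    qed
    moreover have "x = VV q f" using F(2) by (simp add: xQ_def VV_def f_def PP_def)
    ultimately show "x \<in> VV q ` KK q" by blast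
  qed
next
  show "VV q ` KK q \<subseteq> ThetaQ q"
  proof
    fix x assume "x \<in> VV q ` KK q"
    then obtain f where f: "f \<in> KK q" "x = VV q f" by blast
    define F where "F = (\<lambda>t. \<lfloor>f (phiQ q t)\<rfloor>)"
    have sp: "special_seq q F" unfolding special_seq_iff
    proof
      fix t assume t: "t \<in> SQ q"
      obtain a b c where tt: "t = (a,b,c)" by (cases t) auto
      have n: "phiQ q t \<ge> 1" using t tt by (auto simp: SQ_def phiQ_def)
      have "f (phiQ q t) \<in> Dn q (phiQ q t)" using f(1) by (auto simp: KK_def)
      then obtain k where k: "f (phiQ q t) = of_int k" "ok q (inv_into (SQ q) (phiQ q) (phiQ q t)) k"
        using n by (auto simp: Dn_def)
      have "inv_into (SQ q) (phiQ q) (phiQ q t) = t" by (rule inv_into_f_f[OF phi_inj t])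
      with k show "ok q t (F t)" by (simp add: F_def)
    qed
    have "EQ q F n = f n" if n: "n \<ge> 1" for n
    proof -
      obtain k where "f n = of_int k" using Dn_bound[OF bs, of "f n" n] f(1) by (auto simp: KK_def)
      then show ?thesis by (simp add: EQ_def F_def phi_inv[OF n])
    qed
    then have "xQ q F = VV q f" by (simp add: xQ_def VV_def PP_def)
    then show "x \<in> ThetaQ q" using sp f(2) unfolding ThetaQ_def GammaQ_def by (intro image_eqI[of _ _ F]) auto
  qed
qed



lemma two_ints:
  fixes lo hi :: real
  assumes "hi - lo \<ge> 2"
  shows "lo \<le> of_int (\<lfloor>lo\<rfloor> + 1) \<and> of_int (\<lfloor>lo\<rfloor> + 1) \<le> hi \<and>
         lo \<le> of_int (\<lfloor>lo\<rfloor> + 2) \<and> of_int (\<lfloor>lo\<rfloor> + 2) \<le> hi"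
  using assms by linarith

lemma limpt:
  assumes bs: "basic_sequence q" and il: "infinite_in_limit q" and f: "f \<in> KK q"
  shows "VV q f islimpt VV q ` KK q"
proof (rule islimpt_approachable[THEN iffD2], intro allI impI)
  fix e :: real assume e: "e > 0"
  obtain a0 where a0: "(1/2::real)^a0 < e" using real_arch_pow_inv[OF e, of "1/2"] by auto
  define a where "a = max a0 2"
  have a2: "a \<ge> 2" and aa0: "a \<ge> a0" unfolding a_def by auto
  define t where "t = (a,1::nat,2::nat)"
  define n where "n = phiQ q t"
  have tS: "t \<in> SQ q" and Qa: "q n \<ge> 2*a^2" and na: "n \<ge> a + 1"
    using key_pos[OF il a2] unfolding t_def n_def by auto
  have inv: "inv_into (SQ q) (phiQ q) n = t" unfolding n_def by (rule inv_into_f_f[OF phi_inj tS])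
  have n0: "n \<noteq> 0" using na by simp
  define Q where "Q = real (q n)"
  have Q: "Q \<ge> 2 * real a ^ 2" unfolding Q_def using Qa by (metis of_nat_le_iff of_nat_mult of_nat_numeral of_nat_power)
  have ar: "real a \<ge> 2" using a2 by simp
  have Qpos: "Q > 0" using Q ar by (smt (verit) zero_less_power)
  have okiff: "ok q t k \<longleftrightarrow> Q * (1 / real a - 1 / (2 * real a ^ 2)) \<le> of_int k \<and>
                     of_int k \<le> Q * (1 / real a + 1 / (2 * real a ^ 2))" for k
  proof -
    have "ok q t k \<longleftrightarrow> of_int k / Q \<in> {1 / real a - 1 / (2 * real a ^ 2) .. 1 / real a + 1 / (2 * real a ^ 2)}"
      unfolding ok_def t_def Q_def n_def[unfolded t_def] by simp
    also have "\<dots> \<longleftrightarrow> Q * (1 / real a - 1 / (2 * real a ^ 2)) \<le> of_int k \<and>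
                     of_int k \<le> Q * (1 / real a + 1 / (2 * real a ^ 2))"
      using Qpos by (simp only: atLeastAtMost_iff pos_le_divide_eq pos_divide_le_eq mult.commute)
    finally show ?thesis .
  qed
  define lo where "lo = Q * (1 / real a - 1 / (2 * real a ^ 2))"
  define hi where "hi = Q * (1 / real a + 1 / (2 * real a ^ 2))"
  have "hi - lo = Q / real a ^ 2" unfolding hi_def lo_def using ar by (simp add: field_simps)
  also have "\<dots> \<ge> 2" using Q ar by (simp add: field_simps)
  finally have ints: "lo \<le> of_int (\<lfloor>lo\<rfloor> + 1) \<and> of_int (\<lfloor>lo\<rfloor> + 1) \<le> hi \<and>
         lo \<le> of_int (\<lfloor>lo\<rfloor> + 2) \<and> of_int (\<lfloor>lo\<rfloor> + 2) \<le> hi" by (rule two_ints)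
  obtain k0 where k0: "f n = of_int k0" "0 \<le> k0" "k0 \<le> int (q n)"
    using Dn_bound[OF bs, of "f n" n] f by (auto simp: KK_def)
  define k1 where "k1 = (if \<lfloor>lo\<rfloor> + 1 = k0 then \<lfloor>lo\<rfloor> + 2 else \<lfloor>lo\<rfloor> + 1)"
  have k1ne: "k1 \<noteq> k0" unfolding k1_def by auto
  have okk1: "ok q t k1" unfolding okiff using ints unfolding k1_def lo_def hi_def by auto
  then have k1D: "of_int k1 \<in> Dn q n" using n0 inv by (auto simp: Dn_def)
  have k1b: "0 \<le> k1 \<and> k1 \<le> int (q (phiQ q t))" by (rule ok_bounds[OF bs tS okk1])
  define g where "g = f(n := of_int k1)"
  have g: "g \<in> KK q" using f k1D unfolding g_def KK_def by auto
  define m where "m = n - 1"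
  have nm: "n = Suc m" unfolding m_def using n0 by simp
  define d where "d = (of_int k1 - of_int k0) / PP q n"
  have "(\<lambda>i. g (Suc i) / PP q (Suc i) - f (Suc i) / PP q (Suc i)) = (\<lambda>i. if i = m then d else 0)"
    by (auto simp: g_def d_def nm k0(1)[unfolded nm] diff_divide_distrib)
  moreover have "(\<lambda>i. g (Suc i) / PP q (Suc i) - f (Suc i) / PP q (Suc i)) sums (VV q g - VV q f)"
    unfolding VV_def by (intro sums_diff summable_sums VV_summable[OF bs] g f)
  moreover have "(\<lambda>i. if i = m then d else 0) sums d" by (rule sums_single)
  ultimately have diff: "VV q g - VV q f = d" using sums_unique2 by metis
  have PPn: "PP q n = PP q m * Q" unfolding nm Q_def by (simp add: PP_Suc)
  have PPm: "PP q m > 0" using PP_pos[OF bs] by auto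
  have dne: "d \<noteq> 0" using k1ne PP_pos[OF bs, of n] unfolding d_def by simp
  have k1n: "k1 \<le> int (q n)" using k1b unfolding n_def by simp
  have "\<bar>k1 - k0\<bar> \<le> int (q n)" using k1n k1b k0 by linarith
  then have "real_of_int \<bar>k1 - k0\<bar> \<le> real_of_int (int (q n))" by (simp only: of_int_le_iff)
  then have "\<bar>of_int k1 - of_int k0\<bar> \<le> Q" by (metis of_int_abs of_int_diff of_int_of_nat_eq Q_def)
  moreover have "\<bar>d\<bar> = \<bar>of_int k1 - of_int k0\<bar> / PP q n" unfolding d_def
    by (simp only: abs_divide abs_of_pos[OF PP_pos[OF bs]])
  ultimately have "\<bar>d\<bar> \<le> Q / PP q n" using PP_pos[OF bs, of n]
    by (metis divide_right_mono less_le)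
  also have "\<dots> = 1 / PP q m" using PPn Qpos by simp
  also have "\<dots> \<le> 1 / 2^m" using PP_ge[OF bs, of m] PPm by (intro divide_left_mono) auto
  also have "\<dots> = (1/2)^m" by (simp add: power_divide)
  also have "\<dots> \<le> (1/2)^a0" using aa0 na unfolding m_def by (intro power_decreasing) auto
  finally have "\<bar>d\<bar> < e" using a0 by simp
  show "\<exists>x'\<in>VV q ` KK q. x' \<noteq> VV q f \<and> dist x' (VV q f) < e"
  proof (intro bexI conjI)
    show "VV q g \<noteq> VV q f" using diff dne by auto
    show "dist (VV q g) (VV q f) < e" using diff \<open>\<bar>d\<bar> < e\<close> by (simp add: dist_real_def)
  qed (use g in auto)
qed

theorem mainTheorem3:
  fixes q :: "nat \<Rightarrow> nat"
  assumes "basic_sequence q" and "infinite_in_limit q"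
  shows "perfect_set (ThetaQ q)"
  unfolding perfect_set_def Theta_eq[OF assms(1)]
proof
  show "closed (VV q ` KK q)"
    by (intro compact_imp_closed compact_continuous_image VV_cont KK_compact assms(1))
  show "\<forall>x\<in>VV q ` KK q. x islimpt VV q ` KK q"
    using limpt[OF assms] by blast
qed

end
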